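(* Let $(N,+,* )$ be a nilpotent ring with adjoint operation $x\circ y=x+y+x*y$, let $S$ be a subring and $I$ a two-sided ideal of $N$ with $S\cap I=\{0\}$ and $N=S+I$. Then every $x\in N$ can be written uniquely as $x=s\circ i$ with $s\in S$, $i\in I$; define $x\bullet y=s\circ y\circ i$, so that $(N,+,\bullet)$ is a left brace, and let $r(x,y)=(\sigma_x(y),\tau_y(x))$ be its Yang–Baxter map. Let $X\subseteq N$ be such that $(X,r)$ is a solution of the set-theoretic Yang–Baxter equation. Let $J\subseteq I\cap X$ be a two-sided ideal of the ring $N$ and let $k:X\to X$ satisfy $k(x)-x\in J$ for all $x\in X$. Then $\tau_{k(y)}(x)-\tau_y(x)\in J$ for all $x,y\in X$. *)

theory Defs
  imports Main
begin

text \<open>A (not necessarily unital, not necessarily commutative) ring is modelled by the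
  type class ring; the whole type plays the role of N.\<close>

fun nprod :: "'a::ring list \<Rightarrow> 'a" where
  "nprod [] = 0"
| "nprod [x] = x"
| "nprod (x # y # xs) = x * nprod (y # xs)"

definition nilpotent_ring :: "'a::ring itself \<Rightarrow> bool" where
  "nilpotent_ring _ \<longleftrightarrow> (\<exists>n>0. \<forall>xs::'a list. length xs = n \<longrightarrow> nprod xs = 0)"

definition subring :: "'a::ring set \<Rightarrow> bool" where
  "subring S \<longleftrightarrow> 0 \<in> S \<and> (\<forall>x\<in>S. \<forall>y\<in>S. x + y \<in> S \<and> x - y \<in> S \<and> x * y \<in> S)"

definition two_sided_ideal :: "'a::ring set \<Rightarrow> bool" where
  "two_sided_ideal I \<longleftrightarrow> 0 \<in> I \<and> (\<forall>x\<in>I. \<forall>y\<in>I. x + y \<in> I \<and> x - y \<in> I)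
     \<and> (\<forall>x\<in>I. \<forall>n. n * x \<in> I \<and> x * n \<in> I)"

definition adj :: "'a::ring \<Rightarrow> 'a \<Rightarrow> 'a" (infixl "\<circ>\<^sub>a" 70) where
  "x \<circ>\<^sub>a y = x + y + x * y"

definition decomp :: "'a::ring set \<Rightarrow> 'a set \<Rightarrow> 'a \<Rightarrow> 'a \<times> 'a" where
  "decomp S I x = (THE p. fst p \<in> S \<and> snd p \<in> I \<and> x = fst p \<circ>\<^sub>a snd p)"

definition bul :: "'a::ring set \<Rightarrow> 'a set \<Rightarrow> 'a \<Rightarrow> 'a \<Rightarrow> 'a" where
  "bul S I x y = (fst (decomp S I x) \<circ>\<^sub>a y) \<circ>\<^sub>a snd (decomp S I x)"

definition binv :: "'a::ring set \<Rightarrow> 'a set \<Rightarrow> 'a \<Rightarrow> 'a" where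
  "binv S I x = (THE y. bul S I x y = 0)"

definition sigma :: "'a::ring set \<Rightarrow> 'a set \<Rightarrow> 'a \<Rightarrow> 'a \<Rightarrow> 'a" where
  "sigma S I x y = bul S I x y - x"

definition tau :: "'a::ring set \<Rightarrow> 'a set \<Rightarrow> 'a \<Rightarrow> 'a \<Rightarrow> 'a" where
  "tau S I y x = bul S I (binv S I (sigma S I x y)) (bul S I x y)"

definition ybmap :: "'a::ring set \<Rightarrow> 'a set \<Rightarrow> 'a \<times> 'a \<Rightarrow> 'a \<times> 'a" where
  "ybmap S I p = (sigma S I (fst p) (snd p), tau S I (snd p) (fst p))"

definition ybe_solution :: "'b set \<Rightarrow> ('b \<times> 'b \<Rightarrow> 'b \<times> 'b) \<Rightarrow> bool" where
  "ybe_solution X r \<longleftrightarrow>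
     (\<forall>x\<in>X. \<forall>y\<in>X. r (x, y) \<in> X \<times> X) \<and>
     (\<forall>x\<in>X. \<forall>y\<in>X. \<forall>z\<in>X.
        let r12 = (\<lambda>(a, b, c). (fst (r (a, b)), snd (r (a, b)), c));
            r23 = (\<lambda>(a, b, c). (a, fst (r (b, c)), snd (r (b, c))))
        in r12 (r23 (r12 (x, y, z))) = r23 (r12 (r23 (x, y, z))))"

end

theory Submission
  imports Defs
begin

lemma adj_assoc: "((x::'a::ring) \<circ>\<^sub>a y) \<circ>\<^sub>a z = x \<circ>\<^sub>a (y \<circ>\<^sub>a z)"
  unfolding adj_def by (simp add: algebra_simps)

lemma adj_0[simp]: "(x::'a::ring) \<circ>\<^sub>a 0 = x" "0 \<circ>\<^sub>a x = x"
  unfolding adj_def by simp_all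

lemma rinv_step:
  fixes x :: "'a::ring"
  defines "q \<equiv> \<lambda>k. nprod (replicate k (- x))"
  shows "x + (\<Sum>k<m. q (Suc k)) + x * (\<Sum>k<m. q (Suc k)) = - q (Suc m)"
proof (induction m)
  case 0
  then show ?case by (simp add: q_def)
next
  case (Suc m)
  have qs: "q (Suc (Suc m)) = - x * q (Suc m)" by (simp add: q_def)
  have "x + (\<Sum>k<Suc m. q (Suc k)) + x * (\<Sum>k<Suc m. q (Suc k))
      = (x + (\<Sum>k<m. q (Suc k)) + x * (\<Sum>k<m. q (Suc k))) + q (Suc m) + x * q (Suc m)"
    by (simp add: distrib_left algebra_simps)
  also have "\<dots> = x * q (Suc m)" using Suc by simp
  also have "\<dots> = - q (Suc (Suc m))" using qs by simp
  finally show ?case .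
qed

lemma rinv_ex:
  assumes "nilpotent_ring TYPE('a::ring)"
  shows "\<exists>y. (x::'a) \<circ>\<^sub>a y = 0"
proof -
  obtain n where n: "n > 0" "\<forall>xs::'a list. length xs = n \<longrightarrow> nprod xs = 0"
    using assms unfolding nilpotent_ring_def by blast
  then obtain m where m: "n = Suc m" by (cases n) auto
  have "nprod (replicate (Suc m) (- x)) = 0" using n m by simp
  then show ?thesis using rinv_step[of x m] unfolding adj_def by auto
qed

definition ainv :: "'a::ring \<Rightarrow> 'a" where
  "ainv x = (SOME y. x \<circ>\<^sub>a y = 0)"

lemma ainv_r:
  assumes "nilpotent_ring TYPE('a::ring)"
  shows "(x::'a) \<circ>\<^sub>a ainv x = 0"
  unfolding ainv_def using rinv_ex[OF assms, of x] by (rule someI_ex)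

lemma ainv_l:
  assumes "nilpotent_ring TYPE('a::ring)"
  shows "ainv (x::'a) \<circ>\<^sub>a x = 0"
proof -
  let ?y = "ainv x" let ?z = "ainv ?y"
  have "x = x \<circ>\<^sub>a (?y \<circ>\<^sub>a ?z)" using ainv_r[OF assms, of ?y] by simp
  also have "\<dots> = ?z" using ainv_r[OF assms, of x] by (simp add: adj_assoc[symmetric])
  finally show ?thesis using ainv_r[OF assms, of ?y] by simp
qed

lemma lcancel:
  assumes "nilpotent_ring TYPE('a::ring)" and "(x::'a) \<circ>\<^sub>a a = x \<circ>\<^sub>a b"
  shows "a = b"
proof -
  have "ainv x \<circ>\<^sub>a (x \<circ>\<^sub>a a) = ainv x \<circ>\<^sub>a (x \<circ>\<^sub>a b)" using assms(2) by simp
  then show ?thesis by (simp add: adj_assoc[symmetric] ainv_l[OF assms(1)])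
qed

lemma rcancel:
  assumes "nilpotent_ring TYPE('a::ring)" and "(a::'a) \<circ>\<^sub>a x = b \<circ>\<^sub>a x"
  shows "a = b"
proof -
  have "(a \<circ>\<^sub>a x) \<circ>\<^sub>a ainv x = (b \<circ>\<^sub>a x) \<circ>\<^sub>a ainv x" using assms(2) by simp
  then show ?thesis by (simp add: adj_assoc ainv_r[OF assms(1)])
qed

lemma decomp_spec:
  fixes S I :: "'a::ring set"
  assumes nil: "nilpotent_ring TYPE('a)"
    and S: "subring S" and I: "two_sided_ideal I"
    and SI: "S \<inter> I = {0}" and dec: "\<forall>x. \<exists>s\<in>S. \<exists>i\<in>I. x = s + i"
  shows "fst (decomp S I x) \<in> S \<and> snd (decomp S I x) \<in> I \<and> x = fst (decomp S I x) \<circ>\<^sub>a snd (decomp S I x)"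
proof -
  let ?P = "\<lambda>p. fst p \<in> S \<and> snd p \<in> I \<and> x = fst p \<circ>\<^sub>a snd p"
  obtain s i0 where si: "s \<in> S" "i0 \<in> I" "x = s + i0" using dec by blast
  define i where "i = ainv s \<circ>\<^sub>a x"
  have "i = (ainv s \<circ>\<^sub>a s) + i0 + ainv s * i0"
    unfolding i_def si(3) adj_def by (simp add: algebra_simps)
  then have "i = i0 + ainv s * i0" by (simp add: ainv_l[OF nil])
  then have iI: "i \<in> I" using I si(2) unfolding two_sided_ideal_def by auto
  have "s \<circ>\<^sub>a i = x" unfolding i_def by (simp add: adj_assoc[symmetric] ainv_r[OF nil])
  then have ex: "?P (s, i)" using si iI by simp
  have un: "p = q" if "?P p" "?P q" for p q
  proof -
    obtain a b where p: "p = (a, b)" by (cases p)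
    obtain c d where q: "q = (c, d)" by (cases q)
    have h: "a \<in> S" "b \<in> I" "c \<in> S" "d \<in> I" "a \<circ>\<^sub>a b = c \<circ>\<^sub>a d"
      using that p q by auto
    have "a - c = (d + c * d) - (b + a * b)" using h(5) unfolding adj_def
      by (simp add: algebra_simps)
    moreover have "(d + c * d) - (b + a * b) \<in> I"
      using I h unfolding two_sided_ideal_def by simp
    moreover have "a - c \<in> S" using S h unfolding subring_def by simp
    ultimately have "a - c \<in> S \<inter> I" by simp
    then have ac: "a = c" using SI by simp
    then have "b = d" using lcancel[OF nil] h(5) by blast
    then show ?thesis using ac p q by simp
  qed
  have "?P (THE p. ?P p)" by (rule theI[of ?P, OF ex]) (rule un[OF _ ex])
  then show ?thesis unfolding decomp_def .
qed

lemma binv_eq: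
  fixes S I :: "'a::ring set"
  assumes nil: "nilpotent_ring TYPE('a)"
  shows "binv S I a = ainv (fst (decomp S I a)) \<circ>\<^sub>a ainv (snd (decomp S I a))"
proof -
  let ?s = "fst (decomp S I a)" let ?i = "snd (decomp S I a)"
  show ?thesis unfolding binv_def
  proof (rule the_equality)
    show "bul S I a (ainv ?s \<circ>\<^sub>a ainv ?i) = 0"
      unfolding bul_def by (simp add: adj_assoc[symmetric] ainv_r[OF nil] ainv_l[OF nil])
  next
    fix y assume "bul S I a y = 0"
    then have "(?s \<circ>\<^sub>a y) \<circ>\<^sub>a ?i = ainv ?i \<circ>\<^sub>a ?i" unfolding bul_def by (simp add: ainv_l[OF nil])
    then have "?s \<circ>\<^sub>a y = ainv ?i" using rcancel[OF nil] by blast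
    then have "ainv ?s \<circ>\<^sub>a (?s \<circ>\<^sub>a y) = ainv ?s \<circ>\<^sub>a ainv ?i" by simp
    then show "y = ainv ?s \<circ>\<^sub>a ainv ?i" by (simp add: adj_assoc[symmetric] ainv_l[OF nil])
  qed
qed

lemma cg_adj:
  fixes J :: "'a::ring set"
  assumes J: "two_sided_ideal J" and "a - a' \<in> J" "b - b' \<in> J"
  shows "a \<circ>\<^sub>a b - a' \<circ>\<^sub>a b' \<in> J"
proof -
  have "a \<circ>\<^sub>a b - a' \<circ>\<^sub>a b' = (a - a') + (b - b') + ((a - a') * b + a' * (b - b'))"
    unfolding adj_def by (simp add: algebra_simps)
  moreover have "(a - a') + (b - b') + ((a - a') * b + a' * (b - b')) \<in> J"
    using J assms(2,3) unfolding two_sided_ideal_def by simp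
  ultimately show ?thesis by simp
qed

lemma cg_refl: "two_sided_ideal J \<Longrightarrow> (a::'a::ring) - a \<in> J"
  unfolding two_sided_ideal_def by simp

lemma cg_ainv:
  fixes J :: "'a::ring set"
  assumes nil: "nilpotent_ring TYPE('a)" and J: "two_sided_ideal J" and "a - a' \<in> J"
  shows "ainv a - ainv a' \<in> J"
proof -
  have "a' \<circ>\<^sub>a ainv a - a \<circ>\<^sub>a ainv a \<in> J"
  proof -
    have "a' - a \<in> J" using assms(3) J unfolding two_sided_ideal_def
      by (metis minus_diff_eq diff_0 )
    then show ?thesis using cg_adj[OF J _ cg_refl[OF J]] by blast
  qed
  then have j: "a' \<circ>\<^sub>a ainv a \<in> J" by (simp add: ainv_r[OF nil])
  have "ainv a' \<circ>\<^sub>a (a' \<circ>\<^sub>a ainv a) = ainv a"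
    by (simp add: adj_assoc[symmetric] ainv_l[OF nil])
  then have "ainv a - ainv a' = (a' \<circ>\<^sub>a ainv a) + ainv a' * (a' \<circ>\<^sub>a ainv a)"
    unfolding adj_def[of "ainv a'"] by (simp add: algebra_simps)
  moreover have "(a' \<circ>\<^sub>a ainv a) + ainv a' * (a' \<circ>\<^sub>a ainv a) \<in> J"
    using j J unfolding two_sided_ideal_def by simp
  ultimately show ?thesis by simp
qed

lemma cg_decomp:
  fixes S I J :: "'a::ring set"
  assumes nil: "nilpotent_ring TYPE('a)"
    and S: "subring S" and I: "two_sided_ideal I"
    and SI: "S \<inter> I = {0}" and dec: "\<forall>x. \<exists>s\<in>S. \<exists>i\<in>I. x = s + i"
    and J: "two_sided_ideal J" and JI: "J \<subseteq> I" and aa: "a - a' \<in> J"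
  shows "fst (decomp S I a) = fst (decomp S I a') \<and> snd (decomp S I a) - snd (decomp S I a') \<in> J"
proof -
  obtain s i where d: "decomp S I a = (s, i)" by (cases "decomp S I a")
  obtain s' i' where d': "decomp S I a' = (s', i')" by (cases "decomp S I a'")
  have h: "s \<in> S" "i \<in> I" "a = s \<circ>\<^sub>a i"
    using decomp_spec[OF nil S I SI dec, of a] d by auto
  have h': "s' \<in> S" "i' \<in> I" "a' = s' \<circ>\<^sub>a i'"
    using decomp_spec[OF nil S I SI dec, of a'] d' by auto
  have "s - s' = (a - a') - (i + s * i) + (i' + s' * i')"
    using h h' unfolding adj_def by (simp add: algebra_simps)
  moreover have "(a - a') - (i + s * i) + (i' + s' * i') \<in> I"
    using I h h' aa JI unfolding two_sided_ideal_def by auto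
  moreover have "s - s' \<in> S" using S h h' unfolding subring_def by simp
  ultimately have "s - s' \<in> S \<inter> I" by simp
  then have ss: "s = s'" using SI by simp
  have "i = ainv s \<circ>\<^sub>a a" using h by (simp add: adj_assoc[symmetric] ainv_l[OF nil])
  moreover have "i' = ainv s \<circ>\<^sub>a a'" using h' ss by (simp add: adj_assoc[symmetric] ainv_l[OF nil])
  ultimately have "i - i' \<in> J" using cg_adj[OF J cg_refl[OF J] aa] by simp
  then show ?thesis using ss d d' by simp
qed

lemma cg_bul:
  fixes S I J :: "'a::ring set"
  assumes nil: "nilpotent_ring TYPE('a)"
    and S: "subring S" and I: "two_sided_ideal I"
    and SI: "S \<inter> I = {0}" and dec: "\<forall>x. \<exists>s\<in>S. \<exists>i\<in>I. x = s + i"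
    and J: "two_sided_ideal J" and JI: "J \<subseteq> I" and aa: "a - a' \<in> J" and bb: "b - b' \<in> J"
  shows "bul S I a b - bul S I a' b' \<in> J"
proof -
  note c = cg_decomp[OF nil S I SI dec J JI aa]
  show ?thesis unfolding bul_def
    by (rule cg_adj[OF J cg_adj[OF J _ bb]]) (use c cg_refl[OF J] in auto)
qed

lemma cg_binv:
  fixes S I J :: "'a::ring set"
  assumes nil: "nilpotent_ring TYPE('a)"
    and S: "subring S" and I: "two_sided_ideal I"
    and SI: "S \<inter> I = {0}" and dec: "\<forall>x. \<exists>s\<in>S. \<exists>i\<in>I. x = s + i"
    and J: "two_sided_ideal J" and JI: "J \<subseteq> I" and aa: "a - a' \<in> J"
  shows "binv S I a - binv S I a' \<in> J"
proof -
  note c = cg_decomp[OF nil S I SI dec J JI aa]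
  show ?thesis unfolding binv_eq[OF nil]
    by (rule cg_adj[OF J]) (use c cg_refl[OF J] cg_ainv[OF nil J] in auto)
qed

theorem mainTheorem7:
  fixes S I X J :: "'a::ring set" and k :: "'a \<Rightarrow> 'a"
  assumes "nilpotent_ring TYPE('a)"
    and "subring S" and "two_sided_ideal I"
    and "S \<inter> I = {0}" and "\<forall>x. \<exists>s\<in>S. \<exists>i\<in>I. x = s + i"
    and "ybe_solution X (ybmap S I)"
    and "two_sided_ideal J" and "J \<subseteq> I \<inter> X"
    and "\<forall>x\<in>X. k x \<in> X" and "\<forall>x\<in>X. k x - x \<in> J"
  shows "\<forall>x\<in>X. \<forall>y\<in>X. tau S I (k y) x - tau S I y x \<in> J"
proof (intro ballI)
  fix x y assume x: "x \<in> X" and y: "y \<in> X"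
  have JI: "J \<subseteq> I" using assms(8) by auto
  note J = assms(7)
  note bulc = cg_bul[OF assms(1-5) J JI]
  have yy: "k y - y \<in> J" using assms(10) y by blast
  have b1: "bul S I x (k y) - bul S I x y \<in> J" by (rule bulc[OF cg_refl[OF J] yy])
  have "sigma S I x (k y) - sigma S I x y \<in> J"
    using b1 unfolding sigma_def by (simp add: algebra_simps)
  then have "binv S I (sigma S I x (k y)) - binv S I (sigma S I x y) \<in> J"
    by (rule cg_binv[OF assms(1-5) J JI])
  then show "tau S I (k y) x - tau S I y x \<in> J"
    unfolding tau_def by (rule bulc[OF _ b1])
qed

end
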